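(* Let $(A,v)$, $(B,w)$ be valued abelian groups, $f:A\to B$ a group homomorphism, and $S\subseteq A$ a subset satisfying conditions (a), (b), (c) below, with $\varphi:v(S)\to w(B)$ the map from (a). Assume $(A,v)$ is spherically complete. Then for every $a\in A$ and every $\alpha\in v(S)$, $$f(B_\alpha(a))=B_{\varphi(\alpha)}(f(a)),$$ where the right-hand side is the ball in $(B,w)$. Conditions: (a) the assignment $vs\mapsto wf(s)$ ($s\in S$) defines a map $\varphi:v(S)\to w(B)$ (i.e. $vs=vs'\Rightarrow wf(s)=wf(s')$) which is order preserving ($vs<vs'\Rightarrow wf(s)<wf(s')$); (b) for all $a\in A$, $s\in S$: $va\ge vs\Rightarrow wf(a)\ge wf(s)$; (c) for every $b\in B\setminus\{0\}$ there is $s\in S$ with $w(b-f(s))>wb$.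
   Context: A valued abelian group $(A,v)$ is an abelian group $A$ with a map $v:A\to \Gamma\cup\{\infty\}$, $a\mapsto va$, onto a totally ordered set with largest element $\infty$, such that $va=\infty\iff a=0$ and $v(a-a')\ge\min\{va,va'\}$ for all $a,a'\in A$. For $X\subseteq A$ write $v(X)=\{vx\mid x\in X\}$. For $a\in A$ and $\alpha\in v(A)$ the ball is $B_\alpha(a)=\{a'\in A\mid v(a-a')\ge\alpha\}$. A nest of balls is a set of balls totally ordered by inclusion; $(A,v)$ is spherically complete if every nest of balls has nonempty intersection. *)

theory Defs
  imports Main
begin

text \<open>A valued abelian group: the group is the ambient type (class ab_group_add), the
value set Gamma + {infinity} is a linear order whose top element plays the role of infinity.\<close>

definition valued_ab_group :: "('a::ab_group_add \<Rightarrow> 'g::{linorder,order_top}) \<Rightarrow> bool" where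
  "valued_ab_group v \<longleftrightarrow>
     (\<forall>a. v a = top \<longleftrightarrow> a = 0) \<and> (\<forall>a a'. v (a - a') \<ge> min (v a) (v a'))"

definition vball :: "('a::ab_group_add \<Rightarrow> 'g::linorder) \<Rightarrow> 'g \<Rightarrow> 'a \<Rightarrow> 'a set" where
  "vball v \<alpha> a = {a'. v (a - a') \<ge> \<alpha>}"

definition is_ball :: "('a::ab_group_add \<Rightarrow> 'g::linorder) \<Rightarrow> 'a set \<Rightarrow> bool" where
  "is_ball v X \<longleftrightarrow> (\<exists>a \<alpha>. \<alpha> \<in> range v \<and> X = vball v \<alpha> a)"

definition nest_of_balls :: "('a::ab_group_add \<Rightarrow> 'g::linorder) \<Rightarrow> 'a set set \<Rightarrow> bool" where
  "nest_of_balls v N \<longleftrightarrow> (\<forall>X\<in>N. is_ball v X) \<and> (\<forall>X\<in>N. \<forall>Y\<in>N. X \<subseteq> Y \<or> Y \<subseteq> X)"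

definition spherically_complete :: "('a::ab_group_add \<Rightarrow> 'g::linorder) \<Rightarrow> bool" where
  "spherically_complete v \<longleftrightarrow> (\<forall>N. nest_of_balls v N \<longrightarrow> \<Inter>N \<noteq> {})"

end

theory Submission
  imports Defs
begin

lemma vg_sub: "valued_ab_group v \<Longrightarrow> min (v a) (v b) \<le> v (a - b)"
  by (simp add: valued_ab_group_def)

lemma vg_zero: "valued_ab_group v \<Longrightarrow> v 0 = top"
  by (simp add: valued_ab_group_def)

lemma vg_neg: assumes "valued_ab_group v" shows "v (- a) = v a"
proof -
  have "min (v 0) (v a) \<le> v (0 - a)" by (rule vg_sub[OF assms])
  hence 1: "v a \<le> v (- a)" using vg_zero[OF assms] by simp
  have "min (v 0) (v (-a)) \<le> v (0 - (-a))" by (rule vg_sub[OF assms])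
  hence 2: "v (-a) \<le> v a" using vg_zero[OF assms] by simp
  from 1 2 show ?thesis by simp
qed

lemma vg_add: assumes "valued_ab_group v" shows "min (v a) (v b) \<le> v (a + b)"
proof -
  have "min (v a) (v (-b)) \<le> v (a - (-b))" by (rule vg_sub[OF assms])
  thus ?thesis using vg_neg[OF assms] by simp
qed

lemma vg_sym: assumes "valued_ab_group v" shows "v (a - b) = v (b - a)"
  using vg_neg[OF assms, of "a - b"] by simp

lemma vg_eq: assumes "valued_ab_group w" "w e < w (e - t)" shows "w t = w e"
proof -
  have 1: "min (w e) (w (e - t)) \<le> w (e - (e - t))" by (rule vg_sub[OF assms(1)])
  hence "w e \<le> w t" using assms(2) by simp
  moreover have "min (w t) (w (e - t)) \<le> w (t + (e - t))" by (rule vg_add[OF assms(1)])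
  hence "w t \<le> w e" using assms(2) by (auto simp: min_def split: if_splits)
  ultimately show ?thesis by simp
qed

lemma key:
  fixes v :: "'a::ab_group_add \<Rightarrow> 'g::{linorder,order_top}"
    and w :: "'b::ab_group_add \<Rightarrow> 'h::{linorder,order_top}"
    and f :: "'a \<Rightarrow> 'b" and S :: "'a set"
  assumes vA: "valued_ab_group v"
    and wB: "valued_ab_group w"
    and hom: "\<forall>x y. f (x + y) = f x + f y"
    and a_welldef: "\<forall>s\<in>S. \<forall>s'\<in>S. v s = v s' \<longrightarrow> w (f s) = w (f s')"
    and a_mono: "\<forall>s\<in>S. \<forall>s'\<in>S. v s < v s' \<longrightarrow> w (f s) < w (f s')"
    and b: "\<forall>a. \<forall>s\<in>S. v a \<ge> v s \<longrightarrow> w (f a) \<ge> w (f s)"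
    and c: "\<forall>b. b \<noteq> 0 \<longrightarrow> (\<exists>s\<in>S. w (b - f s) > w b)"
    and sc: "spherically_complete v"
    and s0: "s0 \<in> S" and d: "w (f s0) \<le> w d"
  shows "\<exists>x. v s0 \<le> v x \<and> f x = d"
proof -
  have f0: "f 0 = 0" using hom[rule_format, of 0 0] by simp
  have fneg: "f (- x) = - f x" for x
  proof -
    have "f x + f (-x) = 0" using hom[rule_format, of x "-x"] f0 by simp
    thus ?thesis by (metis minus_unique)
  qed
  have fsub: "f (x - y) = f x - f y" for x y
    using hom[rule_format, of x "-y"] fneg[of y] by simp
  define F where "F = {vball v (v s) x | x s. s \<in> S \<and> v s0 \<le> v s \<and> v s0 \<le> v x \<and> w (f s) \<le> w (d - f x)}"
  define Ns where "Ns = {N. N \<subseteq> F \<and> (\<forall>X\<in>N. \<forall>Y\<in>N. X \<subseteq> Y \<or> Y \<subseteq> X)}"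
  have "\<exists>M\<in>Ns. \<forall>X\<in>Ns. M \<subseteq> X \<longrightarrow> X = M"
  proof (rule Zorn_Lemma, intro ballI)
    fix C assume "C \<in> chains Ns"
    hence C: "C \<subseteq> Ns" "\<forall>A\<in>C. \<forall>B\<in>C. A \<subseteq> B \<or> B \<subseteq> A"
      unfolding chains_def chain_subset_def by auto
    show "\<Union>C \<in> Ns" unfolding Ns_def
    proof (intro CollectI conjI ballI)
      show "\<Union>C \<subseteq> F" using C(1) unfolding Ns_def by auto
      fix X Y assume "X \<in> \<Union>C" "Y \<in> \<Union>C"
      then obtain N1 N2 where "N1 \<in> C" "N2 \<in> C" "X \<in> N1" "Y \<in> N2" by auto
      note N = this
      have nestN: "\<forall>X\<in>N. \<forall>Y\<in>N. X \<subseteq> Y \<or> Y \<subseteq> X" if "N \<in> C" for N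
        using that C(1) unfolding Ns_def by blast
      from C(2) N(1,2) have "N1 \<subseteq> N2 \<or> N2 \<subseteq> N1" by simp
      thus "X \<subseteq> Y \<or> Y \<subseteq> X"
      proof
        assume "N1 \<subseteq> N2" thus ?thesis using nestN[OF N(2)] N(3,4) by auto
      next
        assume "N2 \<subseteq> N1" thus ?thesis using nestN[OF N(1)] N(3,4) by auto
      qed
    qed
  qed
  then obtain M where M: "M \<in> Ns" and Mmax: "\<forall>X\<in>Ns. M \<subseteq> X \<longrightarrow> X = M" by blast
  have MF: "M \<subseteq> F" and Mnest: "\<forall>X\<in>M. \<forall>Y\<in>M. X \<subseteq> Y \<or> Y \<subseteq> X" using M Ns_def by auto
  have "nest_of_balls v M" unfolding nest_of_balls_def is_ball_def
    using MF Mnest unfolding F_def by blast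
  with sc obtain z where z: "z \<in> \<Inter>M" unfolding spherically_complete_def by blast
  have extend: "B \<in> M" if "B \<in> F" "\<forall>X\<in>M. B \<subseteq> X" for B
  proof -
    have "insert B M \<in> Ns" using that M unfolding Ns_def by auto
    with Mmax show ?thesis by blast
  qed
  have B0: "vball v (v s0) 0 \<in> F" unfolding F_def using s0 d vg_zero[OF vA] f0 by force
  have Mne: "M \<noteq> {}" using extend[OF B0] by auto
  have memb: "\<exists>s x. X = vball v (v s) x \<and> s \<in> S \<and> v s0 \<le> v s \<and> v s0 \<le> v x
        \<and> w (f s) \<le> w (d - f x) \<and> v s \<le> v (x - z)" if "X \<in> M" for X
  proof -
    from that MF obtain s x where X: "X = vball v (v s) x" "s \<in> S" "v s0 \<le> v s" "v s0 \<le> v x"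
      "w (f s) \<le> w (d - f x)" unfolding F_def by blast
    have "z \<in> X" using z that by blast
    hence "v s \<le> v (x - z)" using X(1) by (simp add: vball_def)
    with X show ?thesis by blast
  qed
  have vz: "v s0 \<le> v z"
  proof -
    obtain X where "X \<in> M" using Mne by auto
    from memb[OF this] obtain s x where X: "s \<in> S" "v s0 \<le> v s" "v s0 \<le> v x" "v s \<le> v (x - z)" by blast
    have "min (v x) (v (x - z)) \<le> v (x - (x - z))" by (rule vg_sub[OF vA])
    thus ?thesis using X by (simp add: min_def split: if_splits)
  qed
  show ?thesis
  proof (cases "f z = d")
    case True thus ?thesis using vz by blast
  next
    case False
    define e where "e = d - f z"
    have "e \<noteq> 0" using False e_def by simp
    with c obtain sz where sz: "sz \<in> S" "w e < w (e - f sz)" by blast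
    have wsz: "w (f sz) = w e" by (rule vg_eq[OF wB sz(2)])
    have sz_ge: "v s \<le> v sz" if "X \<in> M" "X = vball v (v s) x" "s \<in> S"
        "w (f s) \<le> w (d - f x)" "v s \<le> v (x - z)" for X s x
    proof -
      have "w (f s) \<le> w (f (x - z))" using b that by blast
      hence "w (f s) \<le> w (f x - f z)" by (simp add: fsub)
      moreover have "min (w (d - f x)) (w (f x - f z)) \<le> w ((d - f x) + (f x - f z))"
        by (rule vg_add[OF wB])
      ultimately have "w (f s) \<le> w e" using that(4) unfolding e_def
        by (simp add: min_def split: if_splits)
      hence "w (f s) \<le> w (f sz)" using wsz by simp
      thus ?thesis using a_mono sz(1) that(3) by (meson leD leI)
    qed
    have vsz: "v s0 \<le> v sz"
    proof -
      obtain X where "X \<in> M" using Mne by auto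
      from memb[OF this] obtain s x where "X = vball v (v s) x" "s \<in> S" "v s0 \<le> v s"
        "w (f s) \<le> w (d - f x)" "v s \<le> v (x - z)" by blast
      with sz_ge[OF \<open>X \<in> M\<close>] show ?thesis by fastforce
    qed
    define z' where "z' = z + sz"
    have vz': "v s0 \<le> v z'"
      using vg_add[OF vA, of z sz] vz vsz unfolding z'_def by (simp add: min_def split: if_splits)
    have dz': "d - f z' = e - f sz" unfolding z'_def e_def using hom by simp
    show ?thesis
    proof (cases "f z' = d")
      case True thus ?thesis using vz' by blast
    next
      case False
      hence "d - f z' \<noteq> 0" by simp
      with c obtain s' where s': "s' \<in> S" "w (d - f z') < w (d - f z' - f s')" by blast
      have ws': "w (f s') = w (d - f z')" by (rule vg_eq[OF wB s'(2)])
      have "w (f sz) < w (f s')" using ws' dz' sz(2) wsz by simp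
      hence lt: "v sz < v s'" using a_welldef a_mono sz(1) s'(1)
        by (metis linorder_neqE order_less_asym order_less_irrefl)
      define B' where "B' = vball v (v s') z'"
      have B'F: "B' \<in> F" unfolding F_def B'_def using s'(1) lt vsz vz' ws'
        by (intro CollectI exI[of _ z'] exI[of _ s']) auto
      have "\<forall>X\<in>M. B' \<subseteq> X"
      proof (intro ballI subsetI)
        fix X y assume XM: "X \<in> M" and y: "y \<in> B'"
        from memb[OF XM] obtain s x where X: "X = vball v (v s) x" "s \<in> S" "v s0 \<le> v s"
          "w (f s) \<le> w (d - f x)" "v s \<le> v (x - z)" by blast
        have ss: "v s \<le> v sz" using sz_ge[OF XM X(1) X(2) X(4) X(5)] .
        have y1: "v s' \<le> v (z' - y)" using y unfolding B'_def vball_def by simp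
        have "v (z - z') = v sz" unfolding z'_def using vg_neg[OF vA, of sz] by simp
        have "min (v (x - z)) (v (z - z')) \<le> v ((x - z) + (z - z'))" by (rule vg_add[OF vA])
        hence h1: "v s \<le> v (x - z')" using X(5) ss \<open>v (z - z') = v sz\<close>
          by (simp add: min_def split: if_splits)
        have "min (v (x - z')) (v (z' - y)) \<le> v ((x - z') + (z' - y))" by (rule vg_add[OF vA])
        hence "v s \<le> v (x - y)" using h1 y1 ss lt
          by (simp add: min_def split: if_splits)
        thus "y \<in> X" using X(1) by (simp add: vball_def)
      qed
      with extend B'F have "B' \<in> M" by blast
      hence "z \<in> B'" using z by blast
      hence "v s' \<le> v (z' - z)" unfolding B'_def vball_def by simp
      hence "v s' \<le> v sz" unfolding z'_def by simp
      with lt show ?thesis by simp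
    qed
  qed
qed

theorem mainTheorem2:
  fixes v :: "'a::ab_group_add \<Rightarrow> 'g::{linorder,order_top}"
    and w :: "'b::ab_group_add \<Rightarrow> 'h::{linorder,order_top}"
    and f :: "'a \<Rightarrow> 'b" and S :: "'a set" and \<phi> :: "'g \<Rightarrow> 'h"
  assumes vA: "valued_ab_group v"
    and wB: "valued_ab_group w"
    and hom: "\<forall>x y. f (x + y) = f x + f y"
    and a_welldef: "\<forall>s\<in>S. \<forall>s'\<in>S. v s = v s' \<longrightarrow> w (f s) = w (f s')"
    and a_phi: "\<forall>s\<in>S. \<phi> (v s) = w (f s)"
    and a_mono: "\<forall>s\<in>S. \<forall>s'\<in>S. v s < v s' \<longrightarrow> w (f s) < w (f s')"
    and b: "\<forall>a. \<forall>s\<in>S. v a \<ge> v s \<longrightarrow> w (f a) \<ge> w (f s)"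
    and c: "\<forall>b. b \<noteq> 0 \<longrightarrow> (\<exists>s\<in>S. w (b - f s) > w b)"
    and sc: "spherically_complete v"
  shows "\<forall>a. \<forall>\<alpha>\<in>v ` S. f ` vball v \<alpha> a = vball w (\<phi> \<alpha>) (f a)"
proof (intro allI ballI)
  fix a \<alpha> assume "\<alpha> \<in> v ` S"
  then obtain s0 where s0: "s0 \<in> S" "\<alpha> = v s0" by blast
  have f0: "f 0 = 0" using hom[rule_format, of 0 0] by simp
  have fneg: "f (- x) = - f x" for x
  proof -
    have "f x + f (-x) = 0" using hom[rule_format, of x "-x"] f0 by simp
    thus ?thesis by (metis minus_unique)
  qed
  have fsub: "f (x - y) = f x - f y" for x y
    using hom[rule_format, of x "-y"] fneg[of y] by simp
  have ph: "\<phi> \<alpha> = w (f s0)" using a_phi s0 by simp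
  show "f ` vball v \<alpha> a = vball w (\<phi> \<alpha>) (f a)"
  proof
    show "f ` vball v \<alpha> a \<subseteq> vball w (\<phi> \<alpha>) (f a)"
    proof
      fix y assume "y \<in> f ` vball v \<alpha> a"
      then obtain a' where "v s0 \<le> v (a - a')" "y = f a'" using s0 by (auto simp: vball_def)
      hence "w (f s0) \<le> w (f (a - a'))" using b s0 by blast
      thus "y \<in> vball w (\<phi> \<alpha>) (f a)" using ph \<open>y = f a'\<close> by (simp add: vball_def fsub)
    qed
  next
    show "vball w (\<phi> \<alpha>) (f a) \<subseteq> f ` vball v \<alpha> a"
    proof
      fix y assume "y \<in> vball w (\<phi> \<alpha>) (f a)"
      hence "w (f s0) \<le> w (f a - y)" using ph by (simp add: vball_def)
      from key[OF vA wB hom a_welldef a_mono b c sc s0(1) this]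
      obtain x where x: "v s0 \<le> v x" "f x = f a - y" by blast
      have "a - x \<in> vball v \<alpha> a" using x s0 by (simp add: vball_def)
      moreover have "f (a - x) = y" using x fsub by simp
      ultimately show "y \<in> f ` vball v \<alpha> a" by blast
    qed
  qed
qed

end
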